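(* Let $L_1\subseteq T^\omega_{\Sigma_1}$ and $L_2\subseteq T^\omega_{\Sigma_2}$ be regular tree languages, and let $F:\Sigma_1^*\to\Sigma_2$ be a function definable by a Moore machine. Assume that for every $t\in T^\omega_{\Sigma_1}$, $t\in L_1$ iff $\widehat{F}(t)\in L_2$. Then $da(L_1)\le da(L_2)$.
   Context: $T^\omega_\Sigma$ is the set of trees $t:\{l,r\}^*\to\Sigma$. A Moore machine $M=(\Sigma,\Gamma,Q,q_I,\delta,out)$ has finite state set $Q$, initial state $q_I$, transition function $\delta:Q\times\Sigma\to Q$ and output $out:Q\to\Gamma$; $\widehat\delta(\epsilon)=q_I$, $\widehat\delta(w a)=\delta(\widehat\delta(w),a)$; $F:\Sigma^*\to\Gamma$ is definable by $M$ if $F(w)=out(\widehat\delta(w))$ for all $w$. For $t_1\in T^\omega_{\Sigma_1}$, $\widehat F(t_1)\in T^\omega_{\Sigma_2}$ is defined by $\widehat F(t_1)(v)=F(t_1(v_1)\cdots t_1(v_k))$ where $v_1,\dots,v_k$ is the path from the root to $v$. A parity tree automaton (PTA) $\mathcal{A}=(Q,\Sigma,Q_I,\delta,\mathbb{C})$ ($Q$ finite, $Q_I\subseteq Q$, $\delta\subseteq Q\times\Sigma\times Q\times Q$, $\mathbb{C}:Q\to\mathbb{N}$) has computations $\phi:\{l,r\}^*\to Q$ with $\phi(\epsilon)\in Q_I$, $(\phi(v),t(v),\phi(vl),\phi(vr))\in\delta$, accepting if on every branch the largest color seen infinitely often is even; $ACC(\mathcal{A},t)$ the set of accepting computations. Degree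 $da(\mathcal{A})$: $k$ if $|ACC(\mathcal{A},t)|\le k$ for all $t$ and ($k=1$ or not for $k-1$); "finite" if all finite but unbounded; $\aleph_0$ if all countable, not all finite; $2^{\aleph_0}$ otherwise; ordered $1<2<\dots<\text{finite}<\aleph_0<2^{\aleph_0}$. For a regular language $L$, $da(L)=\min\{da(\mathcal{A})\mid L(\mathcal{A})=L\}$. *)

theory Defs
  imports Main "HOL-Library.Countable_Set"
begin

datatype dir = Lft | Rgt

type_synonym 'a tree = "dir list \<Rightarrow> 'a"

record 'a pta =
  states :: "nat set"
  init   :: "nat set"
  trans  :: "(nat \<times> 'a \<times> nat \<times> nat) set"
  col    :: "nat \<Rightarrow> nat"

definition wf_pta :: "'a pta \<Rightarrow> bool" where
  "wf_pta A \<longleftrightarrow> finite (states A) \<and> init A \<subseteq> states A \<and>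
     (\<forall>(p, a, q1, q2) \<in> trans A. p \<in> states A \<and> q1 \<in> states A \<and> q2 \<in> states A)"

definition is_comp :: "'a pta \<Rightarrow> 'a tree \<Rightarrow> nat tree \<Rightarrow> bool" where
  "is_comp A t \<phi> \<longleftrightarrow> \<phi> [] \<in> init A \<and>
     (\<forall>v. (\<phi> v, t v, \<phi> (v @ [Lft]), \<phi> (v @ [Rgt])) \<in> trans A)"

definition branch_node :: "(nat \<Rightarrow> dir) \<Rightarrow> nat \<Rightarrow> dir list" where
  "branch_node \<pi> n = map \<pi> [0..<n]"

definition accepting :: "'a pta \<Rightarrow> nat tree \<Rightarrow> bool" where
  "accepting A \<phi> \<longleftrightarrow>
     (\<forall>\<pi> :: nat \<Rightarrow> dir. even (Max {c. \<exists>\<^sub>\<infinity> n. col A (\<phi> (branch_node \<pi> n)) = c}))"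

definition ACC :: "'a pta \<Rightarrow> 'a tree \<Rightarrow> nat tree set" where
  "ACC A t = {\<phi>. is_comp A t \<phi> \<and> accepting A \<phi>}"

definition lang :: "'a pta \<Rightarrow> 'a tree set" where
  "lang A = {t. ACC A t \<noteq> {}}"

definition regular :: "'a tree set \<Rightarrow> bool" where
  "regular L \<longleftrightarrow> (\<exists>A. wf_pta A \<and> lang A = L)"

datatype degree = DNum nat | DFinite | DAleph0 | DCont

fun deg_le :: "degree \<Rightarrow> degree \<Rightarrow> bool" where
  "deg_le (DNum a) (DNum b) = (a \<le> b)"
| "deg_le (DNum _) _ = True"
| "deg_le DFinite (DNum _) = False"
| "deg_le DFinite _ = True"
| "deg_le DAleph0 d = (d = DAleph0 \<or> d = DCont)"
| "deg_le DCont d = (d = DCont)"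

definition da :: "'a pta \<Rightarrow> degree" where
  "da A =
    (if \<exists>k. \<forall>t. finite (ACC A t) \<and> card (ACC A t) \<le> k
     then DNum (LEAST k. 1 \<le> k \<and> (\<forall>t. finite (ACC A t) \<and> card (ACC A t) \<le> k))
     else if \<forall>t. finite (ACC A t) then DFinite
     else if \<forall>t. countable (ACC A t) then DAleph0
     else DCont)"

definition da_lang :: "'a tree set \<Rightarrow> degree" where
  "da_lang L = (THE d. (\<exists>A. wf_pta A \<and> lang A = L \<and> da A = d) \<and>
                       (\<forall>A. wf_pta A \<and> lang A = L \<longrightarrow> deg_le d (da A)))"

record ('a, 'b) moore =
  mstates :: "nat set"
  minit   :: nat
  mdelta  :: "nat \<Rightarrow> 'a \<Rightarrow> nat"
  mout    :: "nat \<Rightarrow> 'b"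

definition wf_moore :: "('a, 'b) moore \<Rightarrow> bool" where
  "wf_moore M \<longleftrightarrow> finite (mstates M) \<and> minit M \<in> mstates M \<and>
     (\<forall>q a. q \<in> mstates M \<longrightarrow> mdelta M q a \<in> mstates M)"

definition delta_hat :: "('a, 'b) moore \<Rightarrow> 'a list \<Rightarrow> nat" where
  "delta_hat M w = foldl (mdelta M) (minit M) w"

definition moore_definable :: "('a list \<Rightarrow> 'b) \<Rightarrow> bool" where
  "moore_definable F \<longleftrightarrow> (\<exists>M. wf_moore M \<and> (\<forall>w. F w = mout M (delta_hat M w)))"

text \<open>F-hat(t)(v) = F(t(v_1)...t(v_k)), v_1 = root, ..., v_k = v the path from the root to v.\<close>
definition F_hat :: "('a list \<Rightarrow> 'b) \<Rightarrow> 'a tree \<Rightarrow> 'b tree" where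
  "F_hat F t v = F (map (\<lambda>i. t (take i v)) [0..<Suc (length v)])"

end

theory Submission
  imports Defs "HOL-Library.Nat_Bijection"
begin

lemma deg_le_antisym: "deg_le d e \<Longrightarrow> deg_le e d \<Longrightarrow> d = e"
  by (cases d; cases e; auto)

lemma deg_le_trans: "deg_le d e \<Longrightarrow> deg_le e f \<Longrightarrow> deg_le d f"
  by (cases d; cases e; cases f; auto)

lemma min_exists:
  fixes D :: "degree set"
  assumes "D \<noteq> {}"
  shows "\<exists>d\<in>D. \<forall>e\<in>D. deg_le d e"
proof (cases "\<exists>n. DNum n \<in> D")
  case True
  define n where "n = (LEAST n. DNum n \<in> D)"
  have n: "DNum n \<in> D" unfolding n_def using True by (meson LeastI)
  have "\<forall>e\<in>D. deg_le (DNum n) e"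
  proof
    fix e assume "e \<in> D"
    then show "deg_le (DNum n) e"
      by (cases e) (auto simp: n_def intro: Least_le)
  qed
  then show ?thesis using n by blast
next
  case nN: False
  show ?thesis
  proof (cases "DFinite \<in> D")
    case True
    have "\<forall>e\<in>D. deg_le DFinite e"
    proof
      fix e assume "e \<in> D"
      then show "deg_le DFinite e" using nN by (cases e) auto
    qed
    then show ?thesis using True by blast
  next
    case nF: False
    show ?thesis
    proof (cases "DAleph0 \<in> D")
      case True
      have "\<forall>e\<in>D. deg_le DAleph0 e"
      proof
        fix e assume "e \<in> D"
        then show "deg_le DAleph0 e" using nN nF by (cases e) auto
      qed
      then show ?thesis using True by blast
    next
      case False
      then have "D = {DCont}" using nN nF assms
        by (metis (full_types) degree.exhaust insertI1 subsetI subset_singletonD)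
      then show ?thesis by simp
    qed
  qed
qed

lemma da_lang_prop:
  assumes "regular L"
  shows "(\<exists>A. wf_pta A \<and> lang A = L \<and> da A = da_lang L) \<and>
         (\<forall>A. wf_pta A \<and> lang A = L \<longrightarrow> deg_le (da_lang L) (da A))"
proof -
  let ?P = "\<lambda>d. (\<exists>A. wf_pta A \<and> lang A = L \<and> da A = d) \<and>
                       (\<forall>A. wf_pta A \<and> lang A = L \<longrightarrow> deg_le d (da A))"
  let ?D = "da ` {A. wf_pta A \<and> lang A = L}"
  have "?D \<noteq> {}" using assms unfolding regular_def by blast
  then obtain d where "d \<in> ?D" "\<forall>e\<in>?D. deg_le d e" using min_exists by meson
  then have Pd: "?P d" by auto
  have "\<And>e. ?P e \<Longrightarrow> e = d"
    using Pd deg_le_antisym by blast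
  then have "?P (THE d. ?P d)" using Pd by (rule theI[of ?P d, rotated])
  then show ?thesis unfolding da_lang_def .
qed


lemma da_mono:
  fixes A1 :: "'a pta" and A2 :: "'b pta"
  assumes fin: "\<And>t. finite (ACC A2 (S t)) \<Longrightarrow> finite (ACC A1 t) \<and> card (ACC A1 t) \<le> card (ACC A2 (S t))"
    and cnt: "\<And>t. countable (ACC A2 (S t)) \<Longrightarrow> countable (ACC A1 t)"
  shows "deg_le (da A1) (da A2)"
proof (cases "\<exists>k. \<forall>s. finite (ACC A2 s) \<and> card (ACC A2 s) \<le> k")
  case True
  let ?Q2 = "\<lambda>k. 1 \<le> k \<and> (\<forall>s. finite (ACC A2 s) \<and> card (ACC A2 s) \<le> k)"
  let ?Q1 = "\<lambda>k. 1 \<le> k \<and> (\<forall>t. finite (ACC A1 t) \<and> card (ACC A1 t) \<le> k)"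
  from True obtain k where k: "\<forall>s. finite (ACC A2 s) \<and> card (ACC A2 s) \<le> k" by blast
  have "\<forall>s. finite (ACC A2 s) \<and> card (ACC A2 s) \<le> max 1 k"
  proof
    fix s show "finite (ACC A2 s) \<and> card (ACC A2 s) \<le> max 1 k" using k[rule_format, of s] by (simp add: le_max_iff_disj)
  qed
  then have "?Q2 (max 1 k)" by simp
  then have Q2: "?Q2 (LEAST k. ?Q2 k)" by (rule LeastI)
  have Q1: "?Q1 (LEAST k. ?Q2 k)"
  proof -
    have "finite (ACC A1 t) \<and> card (ACC A1 t) \<le> (LEAST k. ?Q2 k)" for t
    proof -
      have "finite (ACC A2 (S t))" "card (ACC A2 (S t)) \<le> (LEAST k. ?Q2 k)" using Q2 by blast+
      then show ?thesis using fin[of t] by simp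
    qed
    then show ?thesis using Q2 by blast
  qed
  then have ex1: "\<exists>k. \<forall>t. finite (ACC A1 t) \<and> card (ACC A1 t) \<le> k" by blast
  have "(LEAST k. ?Q1 k) \<le> (LEAST k. ?Q2 k)" using Q1 by (rule Least_le)
  then show ?thesis using True ex1 unfolding da_def by simp
next
  case nb2: False
  show ?thesis
  proof (cases "\<forall>s. finite (ACC A2 s)")
    case True
    have f1: "\<forall>t. finite (ACC A1 t)" using fin True by blast
    have "da A2 = DFinite" using nb2 True unfolding da_def by simp
    moreover have "da A1 \<noteq> DAleph0 \<and> da A1 \<noteq> DCont" using f1 unfolding da_def by auto
    ultimately show ?thesis by (cases "da A1") auto
  next
    case nf2: False
    show ?thesis
    proof (cases "\<forall>s. countable (ACC A2 s)")
      case True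
      have c1: "\<forall>t. countable (ACC A1 t)" using cnt True by blast
      have "da A2 = DAleph0" using nb2 nf2 True unfolding da_def by simp
      moreover have "da A1 \<noteq> DCont" using c1 unfolding da_def by auto
      ultimately show ?thesis by (cases "da A1") auto
    next
      case False
      then have "da A2 = DCont" using nb2 nf2 unfolding da_def by simp
      then show ?thesis by (cases "da A1") auto
    qed
  qed
qed

section \<open>Product construction\<close>

definition prodA :: "('a, 'b) moore \<Rightarrow> 'b pta \<Rightarrow> 'a pta" where
  "prodA M A = \<lparr> states = prod_encode ` (mstates M \<times> states A),
     init = (\<lambda>q. prod_encode (minit M, q)) ` init A,
     trans = {(prod_encode (m, q), a, prod_encode (mdelta M m a, q1), prod_encode (mdelta M m a, q2))
              | m q a q1 q2. m \<in> mstates M \<and> (q, mout M (mdelta M m a), q1, q2) \<in> trans A},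
     col = (\<lambda>x. col A (snd (prod_decode x))) \<rparr>"

lemma wf_prodA:
  assumes M: "wf_moore M" and A: "wf_pta A"
  shows "wf_pta (prodA M A)"
proof -
  have fM: "finite (mstates M)" and iM: "minit M \<in> mstates M"
    and dM: "\<And>q a. q \<in> mstates M \<Longrightarrow> mdelta M q a \<in> mstates M"
    using M unfolding wf_moore_def by auto
  have fA: "finite (states A)" and iA: "init A \<subseteq> states A"
    and tA: "\<And>p a q1 q2. (p, a, q1, q2) \<in> trans A \<Longrightarrow> p \<in> states A \<and> q1 \<in> states A \<and> q2 \<in> states A"
    using A unfolding wf_pta_def by auto
  have 1: "finite (states (prodA M A))" using fM fA by (simp add: prodA_def)
  have 2: "init (prodA M A) \<subseteq> states (prodA M A)"
  proof
    fix x assume "x \<in> init (prodA M A)"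
    then obtain q where "q \<in> init A" "x = prod_encode (minit M, q)" by (auto simp: prodA_def)
    then show "x \<in> states (prodA M A)" using iM iA by (auto simp: prodA_def)
  qed
  have 3: "p \<in> states (prodA M A) \<and> q1 \<in> states (prodA M A) \<and> q2 \<in> states (prodA M A)"
    if "(p, a, q1, q2) \<in> trans (prodA M A)" for p a q1 q2
  proof -
    from that obtain m q r1 r2 where
      e: "p = prod_encode (m, q)" "q1 = prod_encode (mdelta M m a, r1)" "q2 = prod_encode (mdelta M m a, r2)"
      and m: "m \<in> mstates M" and tr: "(q, mout M (mdelta M m a), r1, r2) \<in> trans A"
      by (auto simp: prodA_def)
    have "q \<in> states A" "r1 \<in> states A" "r2 \<in> states A" using tA[OF tr] by auto
    moreover have "mdelta M m a \<in> mstates M" using dM m by blast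
    ultimately show ?thesis using e m by (auto simp: prodA_def)
  qed
  show ?thesis unfolding wf_pta_def using 1 2 3 by blast
qed

definition mst :: "('a, 'b) moore \<Rightarrow> 'a tree \<Rightarrow> dir list \<Rightarrow> nat" where
  "mst M t v = delta_hat M (map (\<lambda>i. t (take i v)) [0..<length v])"

lemma mst_Nil: "mst M t [] = minit M"
  by (simp add: mst_def delta_hat_def)

lemma map_take_snoc: "map (\<lambda>i. t (take i (v @ [d]))) [0..<length v] = map (\<lambda>i. t (take i v)) [0..<length v]"
  by simp

lemma mst_snoc: "mst M t (v @ [d]) = mdelta M (mst M t v) (t v)"
proof -
  have "map (\<lambda>i. t (take i (v @ [d]))) [0..<length (v @ [d])]
      = map (\<lambda>i. t (take i (v @ [d]))) [0..<length v] @ [t v]"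
    by simp
  also have "\<dots> = map (\<lambda>i. t (take i v)) [0..<length v] @ [t v]"
    using map_take_snoc[of t v d] by (simp only:)
  finally have e: "map (\<lambda>i. t (take i (v @ [d]))) [0..<length (v @ [d])]
      = map (\<lambda>i. t (take i v)) [0..<length v] @ [t v]" .
  show ?thesis unfolding mst_def delta_hat_def e by simp
qed

lemma F_hat_mst:
  assumes "\<forall>w. F w = mout M (delta_hat M w)"
  shows "F_hat F t v = mout M (mdelta M (mst M t v) (t v))"
proof -
  have "map (\<lambda>i. t (take i v)) [0..<Suc (length v)] = map (\<lambda>i. t (take i v)) [0..<length v] @ [t v]"
    by simp
  then show ?thesis using assms by (simp add: F_hat_def mst_def delta_hat_def)
qed

definition gmap :: "('a, 'b) moore \<Rightarrow> 'a tree \<Rightarrow> nat tree \<Rightarrow> nat tree" where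
  "gmap M t \<psi> = (\<lambda>v. prod_encode (mst M t v, \<psi> v))"

lemma mst_in: "wf_moore M \<Longrightarrow> mst M t v \<in> mstates M"
  by (induction v rule: rev_induct) (auto simp: mst_Nil mst_snoc wf_moore_def)

lemma accepting_cong:
  assumes "\<And>v. col A1 (\<phi>1 v) = col A2 (\<phi>2 v)"
  shows "accepting A1 \<phi>1 = accepting A2 \<phi>2"
  unfolding accepting_def using assms by simp

lemma ACC_prod:
  assumes M: "wf_moore M" and F: "\<forall>w. F w = mout M (delta_hat M w)"
  shows "gmap M t ` ACC A (F_hat F t) = ACC (prodA M A) t"
proof (rule equalityI)
  show "gmap M t ` ACC A (F_hat F t) \<subseteq> ACC (prodA M A) t"
  proof
    fix \<phi> assume "\<phi> \<in> gmap M t ` ACC A (F_hat F t)"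
    then obtain \<psi> where \<psi>: "\<psi> \<in> ACC A (F_hat F t)" and \<phi>: "\<phi> = gmap M t \<psi>" by blast
    have c: "is_comp A (F_hat F t) \<psi>" and a: "accepting A \<psi>" using \<psi> by (auto simp: ACC_def)
    have "is_comp (prodA M A) t \<phi>"
      unfolding is_comp_def
    proof
      show "\<phi> [] \<in> init (prodA M A)"
        using c by (simp add: \<phi> gmap_def prodA_def is_comp_def mst_Nil)
      show "\<forall>v. (\<phi> v, t v, \<phi> (v @ [Lft]), \<phi> (v @ [Rgt])) \<in> trans (prodA M A)"
      proof
        fix v
        have "(\<psi> v, F_hat F t v, \<psi> (v @ [Lft]), \<psi> (v @ [Rgt])) \<in> trans A"
          using c by (simp add: is_comp_def)
        then show "(\<phi> v, t v, \<phi> (v @ [Lft]), \<phi> (v @ [Rgt])) \<in> trans (prodA M A)"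
          using mst_in[OF M, of t v] F_hat_mst[OF F, of t v]
          by (auto simp: \<phi> gmap_def prodA_def mst_snoc)
      qed
    qed
    moreover have "accepting (prodA M A) \<phi> = accepting A \<psi>"
      by (rule accepting_cong) (simp add: \<phi> gmap_def prodA_def)
    ultimately show "\<phi> \<in> ACC (prodA M A) t" using a by (simp add: ACC_def)
  qed
next
  show "ACC (prodA M A) t \<subseteq> gmap M t ` ACC A (F_hat F t)"
  proof
    fix \<phi> assume "\<phi> \<in> ACC (prodA M A) t"
    then have c: "is_comp (prodA M A) t \<phi>" and a: "accepting (prodA M A) \<phi>" by (auto simp: ACC_def)
    define \<psi> where "\<psi> = (\<lambda>v. snd (prod_decode (\<phi> v)))"
    have fst_eq: "fst (prod_decode (\<phi> v)) = mst M t v" for v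
    proof (induction v rule: rev_induct)
      case Nil
      then show ?case using c by (auto simp: is_comp_def prodA_def mst_Nil)
    next
      case (snoc d v)
      have "(\<phi> v, t v, \<phi> (v @ [Lft]), \<phi> (v @ [Rgt])) \<in> trans (prodA M A)"
        using c by (simp add: is_comp_def)
      then obtain m q q1 q2 where
        "\<phi> v = prod_encode (m, q)" "\<phi> (v @ [Lft]) = prod_encode (mdelta M m (t v), q1)"
        "\<phi> (v @ [Rgt]) = prod_encode (mdelta M m (t v), q2)"
        by (auto simp: prodA_def)
      then show ?case using snoc by (cases d) (auto simp: mst_snoc)
    qed
    have \<phi>eq: "\<phi> = gmap M t \<psi>"
    proof
      fix v
      have "prod_encode (prod_decode (\<phi> v)) = \<phi> v" by simp
      then show "\<phi> v = gmap M t \<psi> v"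
        by (metis fst_eq \<psi>_def gmap_def prod.collapse)
    qed
    have "is_comp A (F_hat F t) \<psi>"
      unfolding is_comp_def
    proof
      show "\<psi> [] \<in> init A" using c by (auto simp: is_comp_def prodA_def \<psi>_def)
      show "\<forall>v. (\<psi> v, F_hat F t v, \<psi> (v @ [Lft]), \<psi> (v @ [Rgt])) \<in> trans A"
      proof
        fix v
        have "(\<phi> v, t v, \<phi> (v @ [Lft]), \<phi> (v @ [Rgt])) \<in> trans (prodA M A)"
          using c by (simp add: is_comp_def)
        then obtain m q q1 q2 where
          e: "\<phi> v = prod_encode (m, q)" "\<phi> (v @ [Lft]) = prod_encode (mdelta M m (t v), q1)"
          "\<phi> (v @ [Rgt]) = prod_encode (mdelta M m (t v), q2)"
          and tr: "(q, mout M (mdelta M m (t v)), q1, q2) \<in> trans A"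
          by (auto simp: prodA_def)
        have "m = mst M t v" using fst_eq[of v] e by simp
        then show "(\<psi> v, F_hat F t v, \<psi> (v @ [Lft]), \<psi> (v @ [Rgt])) \<in> trans A"
          using tr e F_hat_mst[OF F, of t v] by (simp add: \<psi>_def)
      qed
    qed
    moreover have "accepting A \<psi> = accepting (prodA M A) \<phi>"
      by (rule accepting_cong) (simp add: \<psi>_def prodA_def)
    ultimately have "\<psi> \<in> ACC A (F_hat F t)" using a by (simp add: ACC_def)
    then show "\<phi> \<in> gmap M t ` ACC A (F_hat F t)" using \<phi>eq by blast
  qed
qed

lemma inj_gmap: "inj (gmap M t)"
proof (rule injI)
  fix x y assume "gmap M t x = gmap M t y"
  then have "\<And>v. prod_encode (mst M t v, x v) = prod_encode (mst M t v, y v)"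
    unfolding gmap_def by metis
  then show "x = y" by (simp add: fun_eq_iff)
qed

theorem lemma3p10:
  fixes L1 :: "('a::finite) tree set" and L2 :: "('b::finite) tree set"
    and F :: "'a list \<Rightarrow> 'b"
  assumes "regular L1" and "regular L2"
    and "moore_definable F"
    and "\<forall>t. t \<in> L1 \<longleftrightarrow> F_hat F t \<in> L2"
  shows "deg_le (da_lang L1) (da_lang L2)"
proof -
  obtain M where M: "wf_moore M" and F: "\<forall>w. F w = mout M (delta_hat M w)"
    using assms(3) unfolding moore_definable_def by blast
  obtain A2 where A2: "wf_pta A2" "lang A2 = L2" "da A2 = da_lang L2"
    using da_lang_prop[OF assms(2)] by blast
  let ?A1 = "prodA M A2"
  have acc: "ACC ?A1 t = gmap M t ` ACC A2 (F_hat F t)" for t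
    using ACC_prod[OF M F] by simp
  have wf1: "wf_pta ?A1" using wf_prodA[OF M A2(1)] .
  have "lang ?A1 = L1"
    using assms(4) A2(2) by (auto simp: lang_def acc)
  then have le1: "deg_le (da_lang L1) (da ?A1)"
    using da_lang_prop[OF assms(1)] wf1 by blast
  have "deg_le (da ?A1) (da A2)"
  proof (rule da_mono[where S = "F_hat F"])
    fix t
    have i: "inj_on (gmap M t) X" for X using inj_gmap by (metis inj_on_subset subset_UNIV)
    show "finite (ACC A2 (F_hat F t)) \<Longrightarrow> finite (ACC ?A1 t) \<and> card (ACC ?A1 t) \<le> card (ACC A2 (F_hat F t))"
      by (simp add: acc card_image[OF i])
    show "countable (ACC A2 (F_hat F t)) \<Longrightarrow> countable (ACC ?A1 t)"
      by (simp add: acc)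
  qed
  then show ?thesis using le1 A2(3) deg_le_trans by metis
qed

end
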